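(* Let $\rho=\eta[r,\alpha]$ be a qubit state with $r\neq g$, $J$ the closed interval with endpoints $r$ and $1-\lambda r$, and $S(s):=S(\eta[s,\kappa_s])$ for $s\in J$. For $\bar s\in J$ define \[ \xi(\bar s):=\inf\Big\{\sum_jp_jS(s_j):\ (p_j)\text{ a finite probability vector},\ s_j\in J,\ \sum_jp_js_j=\bar s\Big\}. \] Then the infimum is attained with all $s_j\in\{r,1-\lambda r\}$, and \[ \xi(\bar s)=q_{\bar s}S(\rho)+(1-q_{\bar s})\,h(1-\lambda r),\qquad q_{\bar s}=\frac{\bar s+\lambda r-1}{(1+\lambda)r-1}. \] Moreover, $I_{\mathrm{th}}(\rho)=\max_{\bar s\in J}\big[h(\bar s)-\xi(\bar s)\big]$.
   Context: Qubit memory with Hamiltonian $E_0|0\rangle\langle0|+E_1|1\rangle\langle1|$ at temperature $T$; $\lambda=e^{-(E_1-E_0)/k_{\mathrm B}T}$, $g=1/(1+\lambda)$. $\eta[r,\alpha]$ denotes the density matrix $\begin{pmatrix} r&\alpha\\ \alpha^*&1-r\end{pmatrix}$ in the energy basis. $\kappa_s=|\alpha|\frac{\sqrt{(\lambda s+r-1)(\lambda r+s-1)}}{|(\lambda+1)r-1|}$. $h(x)=-x\log_2x-(1-x)\log_2(1-x)$; $S$ is the von Neumann entropy (base 2). The set of states reachable from $\rho$ by thermal operations is $\vartheta(\rho)=\{\eta[s,\beta]: s\in J,\ |\beta|\le\kappa_s\}$. A code is a finite ensemble $\{(p_k,\sigma^{(k)})\}$ with Holevo information $\chi=S(\sum_kp_k\sigma^{(k)})-\sum_kp_kS(\sigma^{(k)})$;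 $I_{\mathrm{th}}(\rho)$ is the supremum of $\chi$ over codes with all codewords in $\vartheta(\rho)$. *)

theory Defs
  imports "HOL-Analysis.Analysis"
begin

text \<open>Qubit operators are 2x2 complex matrices in the energy basis (|0>, |1>),
  indexed by the numeral type 2 (index 1 = |0>, index 2 = |1>).\<close>

type_synonym qmat = "complex ^ 2 ^ 2"

definition eta :: "real \<Rightarrow> complex \<Rightarrow> qmat" where
  "eta r a = (\<chi> i j. if i = 1 then (if j = 1 then complex_of_real r else a)
                       else (if j = 1 then cnj a else complex_of_real (1 - r)))"

definition ent :: "real \<Rightarrow> real" where
  "ent x = (if x \<le> 0 then 0 else - x * log 2 x)"

definition hbin :: "real \<Rightarrow> real" where
  "hbin x = ent x + ent (1 - x)"

text \<open>Eigenvalues of a 2x2 Hermitian matrix M: the two roots of its characteristic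
  polynomial t^2 - tr(M) t + det(M).\<close>
definition eig_plus :: "qmat \<Rightarrow> real" where
  "eig_plus M = (let t = M$1$1 + M$2$2; d = M$1$1 * M$2$2 - M$1$2 * M$2$1
                 in (Re t + sqrt (Re (t\<^sup>2 - 4 * d))) / 2)"

definition eig_minus :: "qmat \<Rightarrow> real" where
  "eig_minus M = (let t = M$1$1 + M$2$2; d = M$1$1 * M$2$2 - M$1$2 * M$2$1
                 in (Re t - sqrt (Re (t\<^sup>2 - 4 * d))) / 2)"

definition vN_entropy :: "qmat \<Rightarrow> real" where
  "vN_entropy M = ent (eig_plus M) + ent (eig_minus M)"

definition kappa :: "real \<Rightarrow> real \<Rightarrow> complex \<Rightarrow> real \<Rightarrow> real" where
  "kappa lam r a s = cmod a * sqrt ((lam * s + r - 1) * (lam * r + s - 1))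
                      / \<bar>(lam + 1) * r - 1\<bar>"

definition Jint :: "real \<Rightarrow> real \<Rightarrow> real set" where
  "Jint lam r = {min r (1 - lam * r) .. max r (1 - lam * r)}"

text \<open>The set vartheta(rho) of states reachable by thermal operations from eta[r, alpha].\<close>
definition reach :: "real \<Rightarrow> real \<Rightarrow> complex \<Rightarrow> qmat set" where
  "reach lam r a = {eta s b | s b. s \<in> Jint lam r \<and> cmod b \<le> kappa lam r a s}"

definition holevo :: "nat \<Rightarrow> (nat \<Rightarrow> real) \<Rightarrow> (nat \<Rightarrow> qmat) \<Rightarrow> real" where
  "holevo n p sig = vN_entropy (\<Sum>k<n. p k *\<^sub>R sig k) - (\<Sum>k<n. p k * vN_entropy (sig k))"

definition prob_vec :: "nat \<Rightarrow> (nat \<Rightarrow> real) \<Rightarrow> bool" where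
  "prob_vec n p \<longleftrightarrow> (\<forall>k<n. 0 \<le> p k) \<and> (\<Sum>k<n. p k) = 1"

definition I_th :: "real \<Rightarrow> real \<Rightarrow> complex \<Rightarrow> real" where
  "I_th lam r a = Sup {holevo n p sig | n p sig.
      prob_vec n p \<and> (\<forall>k<n. sig k \<in> reach lam r a)}"

definition Sfun :: "real \<Rightarrow> real \<Rightarrow> complex \<Rightarrow> real \<Rightarrow> real" where
  "Sfun lam r a s = vN_entropy (eta s (complex_of_real (kappa lam r a s)))"

definition xi :: "real \<Rightarrow> real \<Rightarrow> complex \<Rightarrow> real \<Rightarrow> real" where
  "xi lam r a sb = Inf {(\<Sum>j<n. p j * Sfun lam r a (s j)) | n p s.
      prob_vec n p \<and> (\<forall>j<n. s j \<in> Jint lam r) \<and> (\<Sum>j<n. p j * s j) = sb}"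

end

theory Submission imports Defs "HOL-Real_Asymp.Real_Asymp" begin


definition xl :: "real \<Rightarrow> real" where "xl z = z * ln z"

lemma xl_cont: "continuous_on {0..} xl"
proof -
  have "continuous (at z within {0..}) xl" if "z \<ge> 0" for z
  proof (cases "z = 0")
    case True
    have "(xl \<longlongrightarrow> 0) (at_right 0)" unfolding xl_def by real_asymp
    then show ?thesis using True by (simp add: continuous_within at_within_Ici_at_right xl_def)
  next
    case False
    then have "z > 0" using that by simp
    then have "isCont xl z" unfolding xl_def by (auto intro!: continuous_intros)
    then show ?thesis using continuous_at_imp_continuous_at_within by blast
  qed
  then show ?thesis using continuous_on_eq_continuous_within by auto
qed

definition kf :: "real \<Rightarrow> real" where
  "kf x = xl (1 + sqrt x) + xl (1 - sqrt x)"

lemma kf_cont: "continuous_on {0..1} kf"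
proof -
  have c1: "continuous_on {0..1} (\<lambda>x. 1 + sqrt x)" "continuous_on {0..1} (\<lambda>x. 1 - sqrt x)"
    by (auto intro!: continuous_intros)
  have "(\<lambda>x. 1 + sqrt x) ` {0..1} \<subseteq> {0..}" "(\<lambda>x. 1 - sqrt x) ` {0..1} \<subseteq> {0..}"
    by auto
  then have "continuous_on {0..1} (\<lambda>x. xl (1 + sqrt x))" "continuous_on {0..1} (\<lambda>x. xl (1 - sqrt x))"
    using continuous_on_compose2[OF xl_cont c1(1)] continuous_on_compose2[OF xl_cont c1(2)] by auto
  then show ?thesis unfolding kf_def by (intro continuous_intros)
qed

definition mf :: "real \<Rightarrow> real" where "mf y = (ln (1+y) - ln (1-y)) / y"

lemma dd_nonneg: fixes y :: real assumes "0 \<le> y" "y < 1" shows "ln (1+y) - ln (1-y) \<le> 2*y/(1-y^2)"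
proof -
  let ?d = "\<lambda>y::real. 2*y/(1-y^2) - (ln (1+y) - ln (1-y))"
  have "?d 0 \<le> ?d y"
  proof (rule DERIV_nonneg_imp_nondecreasing[OF assms(1)])
    fix x :: real assume x: "0 \<le> x" "x \<le> y"
    then have x1: "x < 1" using assms by simp
    have "(?d has_real_derivative (4*x^2/(1-x^2)^2)) (at x)"
    proof -
      have xx: "x*x \<le> x" using x x1 by (simp add: mult_left_le_one_le)
      have ne: "1 - x^2 \<noteq> 0" "1 + x \<noteq> 0" "1 - x \<noteq> 0" using x x1 xx by (auto simp: power2_eq_square)
      have "(?d has_real_derivative ((2*(1-x^2) + 2*x*(2*x))/(1-x^2)^2 - (1/(1+x) + 1/(1-x)))) (at x)"
        using x x1 ne by (auto intro!: derivative_eq_intros simp: power2_eq_square)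
      moreover have "(2*(1-x^2) + 2*x*(2*x))/(1-x^2)^2 - (1/(1+x) + 1/(1-x)) = 4*x^2/(1-x^2)^2"
      proof -
        have n1: "1 - x*x \<noteq> 0" using ne by (simp add: power2_eq_square)
        have n2: "(1 - x*x)*(1-x*x) \<noteq> 0" using n1 by simp
        show ?thesis using n1 n2 ne by (simp add: power2_eq_square divide_simps) (simp add: algebra_simps)
      qed
      ultimately show ?thesis by simp
    qed
    then show "\<exists>d. (?d has_real_derivative d) (at x) \<and> 0 \<le> d" by (intro exI[of _ "4*x^2/(1-x^2)^2"]) auto
  qed
  then show ?thesis by simp
qed

lemma mf_mono: fixes y1 y2 :: real assumes "0 < y1" "y1 \<le> y2" "y2 < 1" shows "mf y1 \<le> mf y2"
proof (rule DERIV_nonneg_imp_nondecreasing[OF assms(2)])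
  fix y :: real assume y: "y1 \<le> y" "y \<le> y2"
  then have y0: "0 < y" "y < 1" using assms by auto
  have n: "1 + y \<noteq> 0" "1 - y \<noteq> 0" "y \<noteq> 0" using y0 by auto
  have "(mf has_real_derivative (((1/(1+y) + 1/(1-y))*y - (ln (1+y) - ln (1-y)))/y^2)) (at y)"
    unfolding mf_def using y0 n
    by (auto intro!: derivative_eq_intros simp: power2_eq_square field_simps)
  moreover have "((1/(1+y) + 1/(1-y))*y - (ln (1+y) - ln (1-y)))/y^2 \<ge> 0"
  proof -
    have "(1/(1+y) + 1/(1-y))*y = 2*y/(1-y^2)" using n
      by (simp add: field_simps power2_eq_square)
    then show ?thesis using dd_nonneg[of y] y0 by simp
  qed
  ultimately show "\<exists>d. (mf has_real_derivative d) (at y) \<and> 0 \<le> d" by blast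
qed

definition kd :: "real \<Rightarrow> real" where "kd x = mf (sqrt x) / 2"

lemma xl_deriv: assumes "0 < z" shows "(xl has_real_derivative (ln z + 1)) (at z)"
  unfolding xl_def using assms by (auto intro!: derivative_eq_intros)

lemma kf_deriv: assumes "0 < x" "x < 1" shows "(kf has_real_derivative kd x) (at x)"
proof -
  have s: "0 < sqrt x" "sqrt x < 1" using assms by auto
  have ds: "(sqrt has_real_derivative inverse (sqrt x) / 2) (at x)"
    using DERIV_real_sqrt assms by auto
  have d1: "((\<lambda>x. 1 + sqrt x) has_real_derivative inverse (sqrt x) / 2) (at x)"
    using DERIV_add[OF DERIV_const ds] by simp
  have d2: "((\<lambda>x. 1 - sqrt x) has_real_derivative - (inverse (sqrt x) / 2)) (at x)"
    using DERIV_diff[OF DERIV_const ds] by simp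
  have "(kf has_real_derivative
     ((ln (1 + sqrt x) + 1) * (inverse (sqrt x) / 2) + (ln (1 - sqrt x) + 1) * (- (inverse (sqrt x) / 2)))) (at x)"
    unfolding kf_def
    by (rule DERIV_add[OF DERIV_chain2[OF xl_deriv d1] DERIV_chain2[OF xl_deriv d2]]) (use s in \<open>auto intro: add_pos_nonneg\<close>)
  moreover have "(ln (1 + sqrt x) + 1) * (inverse (sqrt x) / 2) + (ln (1 - sqrt x) + 1) * (- (inverse (sqrt x) / 2)) = kd x"
    unfolding kd_def mf_def using s by (simp add: field_simps)
  ultimately show ?thesis by simp
qed

lemma kf_convex_open: "convex_on {0<..<1} kf"
proof (rule convex_on_realI[where f' = kd])
  show "connected {0<..<(1::real)}" by simp
  show "(kf has_real_derivative kd x) (at x)" if "x \<in> {0<..<1}" for x using kf_deriv that by auto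
  show "kd x \<le> kd y" if "x \<in> {0<..<1}" "y \<in> {0<..<1}" "x \<le> y" for x y
    using that mf_mono[of "sqrt x" "sqrt y"] unfolding kd_def by auto
qed

lemma kf_convex_ineq:
  fixes x y t :: real
  assumes x: "0 \<le> x" "x \<le> 1" and y: "0 \<le> y" "y \<le> 1" and t: "0 \<le> t" "t \<le> 1"
  shows "kf ((1-t)*x + t*y) \<le> (1-t) * kf x + t * kf y"
proof -
  define e :: "nat \<Rightarrow> real" where "e n = 1 / (real n + 2)" for n
  have e0: "e \<longlonglongrightarrow> 0" unfolding e_def by real_asymp
  have epos: "0 < e n" "e n < 1" for n unfolding e_def by auto
  define sh :: "real \<Rightarrow> nat \<Rightarrow> real" where "sh z n = (1 - e n) * z + e n / 2" for z n
  have sh_in: "sh z n \<in> {0<..<1}" if "0 \<le> z" "z \<le> 1" for z n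
  proof -
    have a: "(1 - e n) * z \<ge> 0" using that epos[of n] by auto
    have b: "(1 - e n) * z \<le> 1 - e n" using that epos[of n] mult_left_le[of z "1 - e n"] by auto
    show ?thesis unfolding sh_def greaterThanLessThan_iff using epos[of n] a b by linarith
  qed
  have sh_lim: "sh z \<longlonglongrightarrow> z" for z
  proof -
    have "(\<lambda>n. (1 - e n) * z + e n / 2) \<longlonglongrightarrow> (1 - 0) * z + 0 / 2"
      by (intro tendsto_intros e0) simp
    then show ?thesis unfolding sh_def by simp
  qed
  have mid: "(1-t) * sh x n + t * sh y n = sh ((1-t)*x + t*y) n" for n
    unfolding sh_def by (simp add: field_simps)
  have m01: "0 \<le> (1-t)*x + t*y" "(1-t)*x + t*y \<le> 1"
    using x y t by (auto intro: convex_bound_le)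
  have ineq: "kf (sh ((1-t)*x + t*y) n) \<le> (1-t) * kf (sh x n) + t * kf (sh y n)" for n
    using convex_onD[OF kf_convex_open, of t "sh x n" "sh y n"] t sh_in[OF x] sh_in[OF y] mid[of n]
    by simp
  have lim: "(\<lambda>n. kf (sh z n)) \<longlonglongrightarrow> kf z" if "0 \<le> z" "z \<le> 1" for z
  proof -
    show ?thesis
      by (rule continuous_on_tendsto_compose[OF kf_cont sh_lim]) (use that sh_in[OF that] in \<open>auto intro!: always_eventually less_imp_le\<close>)
  qed
  have "(\<lambda>n. (1-t) * kf (sh x n) + t * kf (sh y n)) \<longlonglongrightarrow> (1-t) * kf x + t * kf y"
    by (intro tendsto_intros lim x y)
  from LIMSEQ_le[OF lim[OF m01] this] ineq show ?thesis by simp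
qed

lemma kf_0: "kf 0 = 0" by (simp add: kf_def xl_def)

lemma xl_ge: "z \<ge> 0 \<Longrightarrow> xl z \<ge> z - 1"
proof (cases "z = 0")
  case False
  assume "z \<ge> 0" then have z: "z > 0" using False by simp
  have "ln (1/z) \<le> 1/z - 1" using ln_le_minus_one[of "1/z"] z by simp
  then have "- ln z \<le> 1/z - 1" using z by (simp add: ln_div)
  then have "z * (- ln z) \<le> z * (1/z - 1)" using z by (intro mult_left_mono) auto
  then show ?thesis unfolding xl_def using z by (simp add: algebra_simps)
qed (simp add: xl_def)

lemma kf_nonneg: "0 \<le> x \<Longrightarrow> x \<le> 1 \<Longrightarrow> 0 \<le> kf x"
  unfolding kf_def using xl_ge[of "1 + sqrt x"] xl_ge[of "1 - sqrt x"] by auto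

lemma kf_mono: assumes "0 \<le> x" "x \<le> y" "y \<le> 1" shows "kf x \<le> kf y"
proof (cases "y = 0")
  case True then show ?thesis using assms by simp
next
  case False
  then have yp: "y > 0" using assms by simp
  define t where "t = x / y"
  have t: "0 \<le> t" "t \<le> 1" using assms yp by (auto simp: t_def)
  have "x = (1-t)*0 + t*y" using yp by (simp add: t_def)
  then have "kf x \<le> (1-t) * kf 0 + t * kf y"
    using kf_convex_ineq[of 0 y t] t assms by simp
  also have "\<dots> = t * kf y" by (simp add: kf_0)
  also have "\<dots> \<le> kf y" using t kf_nonneg[of y] assms by (simp add: mult_left_le_one_le)
  finally show ?thesis .
qed

definition Gf :: "real \<Rightarrow> real" where
  "Gf x = ent ((1 + sqrt x)/2) + ent ((1 - sqrt x)/2)"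

lemma ent_xl: "z \<ge> 0 \<Longrightarrow> ent z = - xl z / ln 2"
  by (auto simp: ent_def xl_def log_def)

lemma xl_half: "w \<ge> 0 \<Longrightarrow> xl (w/2) = xl w / 2 - w/2 * ln 2"
  by (cases "w = 0") (auto simp: xl_def ln_div algebra_simps)

lemma G_kf: assumes "0 \<le> x" "x \<le> 1" shows "Gf x = 1 - kf x / (2 * ln 2)"
proof -
  have s: "0 \<le> sqrt x" "sqrt x \<le> 1" using assms by auto
  have h1: "xl ((1 + sqrt x)/2) = xl (1 + sqrt x)/2 - (1 + sqrt x)/2 * ln 2"
    by (rule xl_half) (use s in auto)
  have h2: "xl ((1 - sqrt x)/2) = xl (1 - sqrt x)/2 - (1 - sqrt x)/2 * ln 2"
    by (rule xl_half) (use s in auto)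
  have l2: "ln (2::real) > 0" by simp
  have "Gf x = - xl ((1 + sqrt x)/2) / ln 2 - xl ((1 - sqrt x)/2) / ln 2"
    unfolding Gf_def using s by (simp add: ent_xl)
  also have "\<dots> = 1 - kf x / (2 * ln 2)" unfolding h1 h2 kf_def using l2
    by (simp add: field_simps)
  finally show ?thesis .
qed

lemma G_concave:
  fixes x y t :: real
  assumes x: "0 \<le> x" "x \<le> 1" and y: "0 \<le> y" "y \<le> 1" and t: "0 \<le> t" "t \<le> 1"
  shows "(1-t) * Gf x + t * Gf y \<le> Gf ((1-t)*x + t*y)"
proof -
  have m01: "0 \<le> (1-t)*x + t*y" "(1-t)*x + t*y \<le> 1"
    using x y t by (auto intro: convex_bound_le)
  have l2: "ln (2::real) > 0" by simp
  have k: "kf ((1-t)*x + t*y) / (2*ln 2) \<le> ((1-t) * kf x + t * kf y) / (2*ln 2)"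
    using kf_convex_ineq[OF x y t] l2 by (intro divide_right_mono) auto
  have e: "(1-t)*(1 - kf x/(2*ln 2)) + t*(1 - kf y/(2*ln 2)) = 1 - ((1-t)*kf x + t*kf y)/(2*ln 2)"
    using l2 by (simp add: field_simps)
  show ?thesis using k e unfolding G_kf[OF x(1) x(2)] G_kf[OF y(1) y(2)] G_kf[OF m01]
    by linarith
qed

lemma G_mono01: assumes "0 \<le> x" "x \<le> y" "y \<le> 1" shows "Gf y \<le> Gf x"
proof -
  have l2: "ln (2::real) > 0" by simp
  have "kf x / (2*ln 2) \<le> kf y / (2*ln 2)" using kf_mono[OF assms] l2 by (intro divide_right_mono) auto
  then show ?thesis using G_kf[of x] G_kf[of y] assms by simp
qed

lemma G_nonneg: assumes "0 \<le> x" "x \<le> 1" shows "0 \<le> Gf x"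
proof -
  have "Gf 1 \<le> Gf x" using G_mono01[OF assms] by simp
  moreover have "Gf 1 = 0" by (simp add: Gf_def ent_def)
  ultimately show ?thesis by simp
qed

lemma G_big: assumes "1 \<le> x" shows "Gf x = ent ((1 + sqrt x)/2)"
  using assms by (simp add: Gf_def ent_def)

lemma ent_dec: assumes "1 \<le> z" "z \<le> w" shows "ent w \<le> ent z"
proof -
  have "log 2 z \<le> log 2 w" using assms by simp
  moreover have "0 \<le> log 2 z" using assms by simp
  ultimately have "z * log 2 z \<le> w * log 2 w" using assms by (intro mult_mono) auto
  then show ?thesis using assms by (simp add: ent_def)
qed

lemma G_mono: assumes "0 \<le> x" "x \<le> y" shows "Gf y \<le> Gf x"
proof (cases "y \<le> 1")
  case True then show ?thesis using G_mono01 assms by simp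
next
  case False
  have g1: "Gf y \<le> Gf 1"
  proof -
    have "ent ((1 + sqrt y)/2) \<le> ent ((1 + sqrt 1)/2)"
      using False by (intro ent_dec) auto
    then show ?thesis using G_big[of y] G_big[of 1] False by simp
  qed
  show ?thesis
  proof (cases "x \<le> 1")
    case True
    then have "0 \<le> Gf x" using G_nonneg assms by simp
    moreover have "Gf 1 = 0" by (simp add: Gf_def ent_def)
    ultimately show ?thesis using g1 by simp
  next
    case False
    have "ent ((1 + sqrt y)/2) \<le> ent ((1 + sqrt x)/2)"
      using False assms by (intro ent_dec) auto
    then show ?thesis using G_big[of y] G_big[of x] False assms by simp
  qed
qed

lemma G_hbin: "Gf ((2 * s - 1)^2) = hbin s"
proof (cases "2 * s - 1 \<ge> 0")
  case True
  then have sq: "sqrt ((2 * s - 1)^2) = 2 * s - 1" by simp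
  have e: "(1 + (2 * s - 1))/2 = s" "(1 - (2 * s - 1))/2 = 1 - s" by simp_all
  show ?thesis unfolding Gf_def hbin_def sq e by simp
next
  case False
  then have sq: "sqrt ((2 * s - 1)^2) = 1 - 2 * s" by simp
  have e: "(1 + (1 - 2 * s))/2 = 1 - s" "(1 - (1 - 2 * s))/2 = s" by simp_all
  show ?thesis unfolding Gf_def hbin_def sq e by simp
qed



lemma two_ne_one: "(2::2) \<noteq> 1" by simp

lemma eta_comp [simp]:
  "eta s b $ 1 $ 1 = complex_of_real s" "eta s b $ 1 $ 2 = b"
  "eta s b $ 2 $ 1 = cnj b" "eta s b $ 2 $ 2 = complex_of_real (1 - s)"
  by (simp_all add: eta_def)

lemma vN_eta: "vN_entropy (eta s b) = Gf ((2 * s - 1)^2 + 4 * (cmod b)^2)"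
proof -
  have bb: "b * cnj b = complex_of_real ((cmod b)^2)" using complex_norm_square[of b] by simp
  have t: "eta s b $ 1 $ 1 + eta s b $ 2 $ 2 = 1" by simp
  have d: "eta s b $ 1 $ 1 * eta s b $ 2 $ 2 - eta s b $ 1 $ 2 * eta s b $ 2 $ 1
         = complex_of_real (s * (1 - s) - (cmod b)^2)" using bb by simp
  have r: "Re (1\<^sup>2 - 4 * complex_of_real (s * (1 - s) - (cmod b)^2)) = (2 * s - 1)^2 + 4 * (cmod b)^2"
    by (simp add: algebra_simps power2_eq_square)
  show ?thesis
    unfolding vN_entropy_def eig_plus_def eig_minus_def Let_def t d r Gf_def by simp
qed

lemma sc: "r *\<^sub>R (z::complex) = complex_of_real r * z" by (simp add: scaleR_conv_of_real)

lemma avg_eta: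
  assumes "(\<Sum>k<n. p k) = (1::real)"
  shows "(\<Sum>k<n. p k *\<^sub>R eta (s k) (b k)) = eta (\<Sum>k<n. p k * s k) (\<Sum>k<n. complex_of_real (p k) * b k)"
proof -
  have one: "(\<Sum>k<n. complex_of_real (p k)) = 1" using assms by (metis of_real_1 of_real_sum)
  have c1: "(\<Sum>k<n. complex_of_real (p k) * complex_of_real (1 - s k)) = complex_of_real (1 - (\<Sum>k<n. p k * s k))"
  proof -
    have "(\<Sum>k<n. complex_of_real (p k) * complex_of_real (1 - s k)) = (\<Sum>k<n. complex_of_real (p k)) - (\<Sum>k<n. complex_of_real (p k * s k))"
      by (simp add: sum_subtractf[symmetric] algebra_simps of_real_sum)
    then show ?thesis using one by (simp add: of_real_sum)
  qed
  have comp: "(\<Sum>k<n. p k *\<^sub>R eta (s k) (b k)) $ i $ j = (\<Sum>k<n. complex_of_real (p k) * (eta (s k) (b k) $ i $ j))" for i j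
    by (simp only: sum_component vector_scaleR_component sc)
  have e11: "(\<Sum>k<n. complex_of_real (p k) * complex_of_real (s k)) = complex_of_real (\<Sum>k<n. p k * s k)"
    by (simp add: of_real_sum)
  have e21: "(\<Sum>k<n. complex_of_real (p k) * cnj (b k)) = cnj (\<Sum>k<n. complex_of_real (p k) * b k)"
    by simp
  show ?thesis
    unfolding vec_eq_iff
  proof (intro allI)
    fix i j :: 2
    have "i = 1 \<or> i = 2" "j = 1 \<or> j = 2" using exhaust_2 by auto
    then show "(\<Sum>k<n. p k *\<^sub>R eta (s k) (b k)) $ i $ j = eta (\<Sum>k<n. p k * s k) (\<Sum>k<n. complex_of_real (p k) * b k) $ i $ j"
    proof (elim disjE)
      assume "i = 1" "j = 1" then show ?thesis unfolding comp eta_comp using e11 by simp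
    next
      assume "i = 1" "j = 2" then show ?thesis unfolding comp eta_comp by simp
    next
      assume "i = 2" "j = 1" then show ?thesis unfolding comp eta_comp using e21 by simp
    next
      assume "i = 2" "j = 2" then show ?thesis unfolding comp eta_comp using c1 by simp
    qed
  qed
qed



locale setting =
  fixes lam r :: real and a :: complex
  assumes lam0: "0 < lam" and lam1: "lam \<le> 1" and r0: "0 \<le> r" and r1: "r \<le> 1"
    and aa: "(cmod a)\<^sup>2 \<le> r * (1 - r)" and Dne: "(1 + lam) * r - 1 \<noteq> 0"
begin

definition "D = (1 + lam) * r - 1"
definition "V = vN_entropy (eta r a)"
definition "H = hbin (1 - lam * r)"
definition "Lf s = ((s + lam * r - 1) / D) * V + (1 - (s + lam * r - 1) / D) * H"

lemma D_ne: "D \<noteq> 0" using Dne by (simp add: D_def)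

lemma lr: "0 \<le> lam * r" "lam * r \<le> 1"
  using lam0 lam1 r0 r1 by (auto simp: mult_le_one)

lemma J_u: assumes "s \<in> Jint lam r"
  shows "0 \<le> (r - s) / D" "(r - s) / D \<le> 1" "s = r - ((r - s) / D) * D"
proof -
  have "r - (1 - lam * r) = D" by (simp add: D_def algebra_simps)
  then show "0 \<le> (r - s) / D" "(r - s) / D \<le> 1"
    using assms D_ne unfolding Jint_def
    by (cases "D > 0"; auto simp: divide_simps split: if_splits)+
  show "s = r - ((r - s) / D) * D" using D_ne by simp
qed

lemma J01: assumes "s \<in> Jint lam r" shows "0 \<le> s" "s \<le> 1"
  using assms lr r0 r1 unfolding Jint_def by auto

lemma r_J: "r \<in> Jint lam r" and e_J: "1 - lam * r \<in> Jint lam r"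
  unfolding Jint_def by auto

lemma kappa_eq: assumes "s \<in> Jint lam r"
  shows "kappa lam r a s = cmod a * sqrt ((1 - lam * ((r - s) / D)) * (1 - (r - s) / D))"
    and "(1 - lam * ((r - s) / D)) * (1 - (r - s) / D) \<ge> 0"
proof -
  define u where "u = (r - s) / D"
  have u: "0 \<le> u" "u \<le> 1" "s = r - u * D" using J_u[OF assms] by (auto simp: u_def)
  have X: "(1 - lam * u) * (1 - u) \<ge> 0" using u lam1 lam0
    by (intro mult_nonneg_nonneg) (auto simp: mult_le_one)
  have P: "(lam * s + r - 1) * (lam * r + s - 1) = D^2 * ((1 - lam * u) * (1 - u))"
    unfolding u(3) by (simp add: D_def power2_eq_square algebra_simps)
  have "sqrt ((lam * s + r - 1) * (lam * r + s - 1)) = \<bar>D\<bar> * sqrt ((1 - lam * u) * (1 - u))"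
    unfolding P by (simp add: real_sqrt_mult)
  then show "kappa lam r a s = cmod a * sqrt ((1 - lam * ((r - s) / D)) * (1 - (r - s) / D))"
  proof -
    have "(lam+1)*r - 1 = D" by (simp add: D_def add.commute)
    then show ?thesis unfolding kappa_def u_def[symmetric] using D_ne \<open>sqrt _ = _\<close> by simp
  qed
  show "(1 - lam * ((r - s) / D)) * (1 - (r - s) / D) \<ge> 0" using X by (simp add: u_def)
qed

definition "Qs s = (2 * s - 1)^2 + 4 * (cmod a)^2 * ((1 - lam * ((r - s) / D)) * (1 - (r - s) / D))"

lemma kappa_nonneg: "s \<in> Jint lam r \<Longrightarrow> 0 \<le> kappa lam r a s"
  using kappa_eq by simp

lemma kappa_sq: "s \<in> Jint lam r \<Longrightarrow> (kappa lam r a s)^2 = (cmod a)^2 * ((1 - lam * ((r - s) / D)) * (1 - (r - s) / D))"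
  using kappa_eq[of s] by (simp add: power_mult_distrib)

lemma Sfun_Q: "s \<in> Jint lam r \<Longrightarrow> Sfun lam r a s = Gf (Qs s)"
  unfolding Sfun_def vN_eta Qs_def using kappa_sq[of s] by (simp add: mult.assoc)

lemma Q0: "Qs r = (2 * r - 1)^2 + 4 * (cmod a)^2" by (simp add: Qs_def)
lemma Q1: "Qs (1 - lam * r) = (2 * (1 - lam * r) - 1)^2"
proof -
  have "r - (1 - lam * r) = D" by (simp add: D_def algebra_simps)
  then show ?thesis using D_ne by (simp add: Qs_def)
qed

lemma Sfun_r: "Sfun lam r a r = V"
  using Sfun_Q[OF r_J] Q0 by (simp add: V_def vN_eta)
lemma Sfun_e: "Sfun lam r a (1 - lam * r) = H"
  by (simp only: Sfun_Q[OF e_J] Q1 H_def G_hbin)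

lemma Sfun_ge: assumes "s \<in> Jint lam r" shows "Lf s \<le> Sfun lam r a s"
proof -
  define u where "u = (r - s) / D"
  have u: "0 \<le> u" "u \<le> 1" "s = r - u * D" using J_u[OF assms] by (auto simp: u_def)
  define Q0 where "Q0 = (2 * r - 1)^2 + 4 * (cmod a)^2"
  define Q1 where "Q1 = (2 * (1 - lam * r) - 1)^2"
  have q: "Qs s = (2 * (r - u * D) - 1)^2 + 4 * (cmod a)^2 * ((1 - lam * u) * (1 - u))"
    unfolding Qs_def u_def[symmetric] using u(3) by simp
  have ident: "(1 - u) * Q0 + u * Q1 - Qs s = u * (1 - u) * (4 * D^2 + 4 * lam * (cmod a)^2)"
    unfolding q Q0_def Q1_def D_def by (simp add: power2_eq_square algebra_simps)
  have Qle: "Qs s \<le> (1 - u) * Q0 + u * Q1"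
  proof -
    have "0 \<le> u * (1 - u) * (4 * D^2 + 4 * lam * (cmod a)^2)" using u lam0 by simp
    then show ?thesis using ident by simp
  qed
  have Qge: "0 \<le> Qs s" unfolding Qs_def using kappa_eq(2)[OF assms] by simp
  have "Q0 = 1 - 4*(r*(1-r) - (cmod a)^2)" unfolding Q0_def by (simp add: power2_eq_square algebra_simps)
  moreover have "0 \<le> r*(1-r) - (cmod a)^2" using aa by simp
  ultimately have Q0le: "Q0 \<le> 1" by simp
  have Q0b: "0 \<le> Q0" "Q0 \<le> 1" using Q0le unfolding Q0_def by auto
  have "Q1 = 1 - 4*((lam*r)*(1 - lam*r))" unfolding Q1_def by (simp add: power2_eq_square algebra_simps)
  moreover have "0 \<le> (lam*r)*(1 - lam*r)" using lr by simp
  ultimately have Q1le: "Q1 \<le> 1" by simp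
  have Q1b: "0 \<le> Q1" "Q1 \<le> 1" using Q1le unfolding Q1_def by auto
  have "Gf ((1 - u) * Q0 + u * Q1) \<le> Gf (Qs s)" using G_mono[OF Qge Qle] .
  moreover have "(1 - u) * Gf Q0 + u * Gf Q1 \<le> Gf ((1 - u) * Q0 + u * Q1)"
    using G_concave[OF Q0b Q1b u(1) u(2)] .
  moreover have "Gf Q0 = V" unfolding Q0_def V_def vN_eta by simp
  moreover have "Gf Q1 = H" unfolding Q1_def H_def G_hbin by simp
  moreover have "Lf s = (1 - u) * V + u * H"
  proof -
    have "(s + lam * r - 1) / D = 1 - u" unfolding u_def using D_ne by (simp add: D_def field_simps)
    then show ?thesis unfolding Lf_def by simp
  qed
  ultimately show ?thesis using Sfun_Q[OF assms] by simp
qed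

lemma Lf_alt: "Lf s = (H + (V - H) / D * (lam * r - 1)) + (V - H) / D * s"
  unfolding Lf_def using D_ne by (simp add: field_simps)

lemma Lf_sum: assumes "prob_vec n p" shows "(\<Sum>j<n. p j * Lf (s j)) = Lf (\<Sum>j<n. p j * s j)"
proof -
  have "(\<Sum>j<n. p j * Lf (s j)) = (\<Sum>j<n. p j * (H + (V - H) / D * (lam * r - 1)) + (V - H) / D * (p j * s j))"
    unfolding Lf_alt by (simp add: algebra_simps)
  also have "\<dots> = (H + (V - H) / D * (lam * r - 1)) * (\<Sum>j<n. p j) + (V - H) / D * (\<Sum>j<n. p j * s j)"
    by (simp add: sum.distrib sum_distrib_left sum_distrib_right mult.commute sum_divide_distrib)
  also have "\<dots> = Lf (\<Sum>j<n. p j * s j)" using assms unfolding prob_vec_def Lf_alt by simp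
  finally show ?thesis .
qed

lemma conv_J: assumes "prob_vec n p" "\<forall>j<n. s j \<in> Jint lam r"
  shows "(\<Sum>j<n. p j * s j) \<in> Jint lam r"
proof -
  define lo where "lo = min r (1 - lam * r)"
  define hi where "hi = max r (1 - lam * r)"
  have J: "Jint lam r = {lo..hi}" by (simp add: Jint_def lo_def hi_def)
  have p: "\<forall>j<n. 0 \<le> p j" "(\<Sum>j<n. p j) = 1" using assms(1) by (auto simp: prob_vec_def)
  have "(\<Sum>j<n. p j * lo) \<le> (\<Sum>j<n. p j * s j)"
    using p assms(2) J by (intro sum_mono mult_left_mono) auto
  moreover have "(\<Sum>j<n. p j * s j) \<le> (\<Sum>j<n. p j * hi)"
    using p assms(2) J by (intro sum_mono mult_left_mono) auto
  moreover have "(\<Sum>j<n. p j * lo) = lo" "(\<Sum>j<n. p j * hi) = hi"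
    using p by (simp_all add: sum_distrib_right[symmetric])
  ultimately show ?thesis using J by simp
qed

lemma q_props: assumes "sb \<in> Jint lam r"
  shows "0 \<le> (sb + lam * r - 1) / D" "(sb + lam * r - 1) / D \<le> 1"
    "(sb + lam * r - 1) / D * r + (1 - (sb + lam * r - 1) / D) * (1 - lam * r) = sb"
proof -
  have e: "(sb + lam * r - 1) / D = 1 - (r - sb) / D" using D_ne by (simp add: D_def field_simps)
  show "0 \<le> (sb + lam * r - 1) / D" "(sb + lam * r - 1) / D \<le> 1" using J_u[OF assms] e by auto
  have g: "q * r + (1 - q) * (1 - lam * r) = 1 - lam * r + q * D" for q by (simp add: D_def algebra_simps)
  show "(sb + lam * r - 1) / D * r + (1 - (sb + lam * r - 1) / D) * (1 - lam * r) = sb"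
    unfolding g using D_ne by simp
qed

lemma xi_eq: assumes "sb \<in> Jint lam r"
  shows "xi lam r a sb = Lf sb"
    and "\<exists>n p s. prob_vec n p \<and> (\<forall>j<n. s j \<in> {r, 1 - lam * r})
                \<and> (\<Sum>j<n. p j * s j) = sb \<and> (\<Sum>j<n. p j * Sfun lam r a (s j)) = Lf sb"
proof -
  define q where "q = (sb + lam * r - 1) / D"
  note qp = q_props[OF assms, folded q_def]
  define p :: "nat \<Rightarrow> real" where "p j = (if j = 0 then q else 1 - q)" for j
  define s :: "nat \<Rightarrow> real" where "s j = (if j = 0 then r else 1 - lam * r)" for j
  have pv: "prob_vec 2 p" using qp unfolding prob_vec_def p_def by (auto simp: numeral_2_eq_2)
  have ss: "\<forall>j<2. s j \<in> {r, 1 - lam * r}" unfolding s_def by auto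
  have sm: "(\<Sum>j<2. p j * s j) = sb" using qp(3) unfolding p_def s_def by (simp add: numeral_2_eq_2)
  have sv: "(\<Sum>j<2. p j * Sfun lam r a (s j)) = Lf sb"
    unfolding p_def s_def Lf_def q_def[symmetric] by (simp add: numeral_2_eq_2 Sfun_r Sfun_e)
  show "\<exists>n p s. prob_vec n p \<and> (\<forall>j<n. s j \<in> {r, 1 - lam * r})
                \<and> (\<Sum>j<n. p j * s j) = sb \<and> (\<Sum>j<n. p j * Sfun lam r a (s j)) = Lf sb"
    using pv ss sm sv by blast
  show "xi lam r a sb = Lf sb"
    unfolding xi_def
  proof (rule cInf_eq_minimum)
    show "Lf sb \<in> {\<Sum>j<n. p j * Sfun lam r a (s j) |n p s.
          prob_vec n p \<and> (\<forall>j<n. s j \<in> Jint lam r) \<and> (\<Sum>j<n. p j * s j) = sb}"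
      unfolding mem_Collect_eq
      apply (rule exI[of _ 2], rule exI[of _ p], rule exI[of _ s])
      using pv ss sm sv r_J e_J by auto
  next
    fix x assume "x \<in> {\<Sum>j<n. p j * Sfun lam r a (s j) |n p s.
          prob_vec n p \<and> (\<forall>j<n. s j \<in> Jint lam r) \<and> (\<Sum>j<n. p j * s j) = sb}"
    then obtain n p' s' where x: "x = (\<Sum>j<n. p' j * Sfun lam r a (s' j))" "prob_vec n p'"
      "\<forall>j<n. s' j \<in> Jint lam r" "(\<Sum>j<n. p' j * s' j) = sb" by blast
    have "(\<Sum>j<n. p' j * Lf (s' j)) \<le> x" unfolding x(1)
      using x(2,3) Sfun_ge by (intro sum_mono mult_left_mono) (auto simp: prob_vec_def)
    then show "Lf sb \<le> x" using Lf_sum[OF x(2)] x(4) by simp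
  qed
qed

lemma kappa_r: "kappa lam r a r = cmod a"
  using kappa_eq(1)[OF r_J] by simp

lemma holevo_bound:
  assumes pv: "prob_vec n p" and sig: "\<forall>k<n. sig k \<in> reach lam r a"
  shows "\<exists>sb \<in> Jint lam r. holevo n p sig \<le> hbin sb - Lf sb"
proof -
  have "\<forall>k. \<exists>x. k < n \<longrightarrow> sig k = eta (fst x) (snd x) \<and> fst x \<in> Jint lam r \<and> cmod (snd x) \<le> kappa lam r a (fst x)"
    using sig unfolding reach_def by force
  then obtain f where f: "\<And>k. k < n \<Longrightarrow> sig k = eta (fst (f k)) (snd (f k)) \<and> fst (f k) \<in> Jint lam r \<and> cmod (snd (f k)) \<le> kappa lam r a (fst (f k))"
    by metis
  define s where "s k = fst (f k)" for k
  define b where "b k = snd (f k)" for k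
  have sk: "\<And>k. k < n \<Longrightarrow> sig k = eta (s k) (b k)" "\<And>k. k < n \<Longrightarrow> s k \<in> Jint lam r"
    "\<And>k. k < n \<Longrightarrow> cmod (b k) \<le> kappa lam r a (s k)" using f by (auto simp: s_def b_def)
  have p: "\<forall>k<n. 0 \<le> p k" "(\<Sum>k<n. p k) = 1" using pv by (auto simp: prob_vec_def)
  define sb where "sb = (\<Sum>k<n. p k * s k)"
  have sbJ: "sb \<in> Jint lam r" unfolding sb_def using conv_J[OF pv] sk(2) by auto
  have avg: "(\<Sum>k<n. p k *\<^sub>R sig k) = eta sb (\<Sum>k<n. complex_of_real (p k) * b k)"
    unfolding sb_def using avg_eta[OF p(2)] sk(1) by (metis (no_types, lifting) lessThan_iff sum.cong)
  have v1: "vN_entropy (\<Sum>k<n. p k *\<^sub>R sig k) \<le> hbin sb"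
    unfolding avg vN_eta G_hbin[symmetric] by (rule G_mono) auto
  have v2: "Sfun lam r a (s k) \<le> vN_entropy (sig k)" if "k < n" for k
  proof -
    have "(cmod (b k))^2 \<le> (kappa lam r a (s k))^2" using sk(3)[OF that] by (intro power_mono) auto
    then have "(2 * s k - 1)^2 + 4 * (cmod (b k))^2 \<le> Qs (s k)"
      using kappa_sq[OF sk(2)[OF that]] by (simp add: Qs_def mult.assoc)
    then show ?thesis unfolding sk(1)[OF that] vN_eta Sfun_Q[OF sk(2)[OF that]] by (intro G_mono) auto
  qed
  have "Lf sb = (\<Sum>k<n. p k * Lf (s k))" unfolding sb_def using Lf_sum[OF pv] by simp
  also have "\<dots> \<le> (\<Sum>k<n. p k * Sfun lam r a (s k))"
    using Sfun_ge sk(2) p(1) by (intro sum_mono mult_left_mono) auto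
  also have "\<dots> \<le> (\<Sum>k<n. p k * vN_entropy (sig k))"
    using v2 p(1) by (intro sum_mono mult_left_mono) auto
  finally have "Lf sb \<le> (\<Sum>k<n. p k * vN_entropy (sig k))" .
  then have "holevo n p sig \<le> hbin sb - Lf sb" using v1 unfolding holevo_def by simp
  then show ?thesis using sbJ by blast
qed

lemma achieve:
  assumes "s0 \<in> Jint lam r"
  shows "\<exists>n p sig. prob_vec n p \<and> (\<forall>k<n. sig k \<in> reach lam r a) \<and> holevo n p sig = hbin s0 - Lf s0"
proof -
  define q where "q = (s0 + lam * r - 1) / D"
  note qp = q_props[OF assms, folded q_def]
  define p :: "nat \<Rightarrow> real" where "p k = (if k = 2 then 1 - q else q / 2)" for k
  define s :: "nat \<Rightarrow> real" where "s k = (if k = 2 then 1 - lam * r else r)" for k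
  define b :: "nat \<Rightarrow> complex" where "b k = (if k = 0 then a else if k = 1 then - a else 0)" for k
  define sig where "sig k = eta (s k) (b k)" for k
  have p3: "(\<Sum>k<3. p k) = 1" unfolding p_def by (simp add: numeral_3_eq_3)
  have pv: "prob_vec 3 p" using qp p3 unfolding prob_vec_def by (auto simp: p_def)
  have inr: "\<forall>k<3. sig k \<in> reach lam r a"
  proof (intro allI impI)
    fix k :: nat assume "k < 3"
    then have "k = 0 \<or> k = 1 \<or> k = 2" by auto
    moreover have "eta r a \<in> reach lam r a" "eta r (-a) \<in> reach lam r a"
      unfolding reach_def using r_J kappa_r by force+
    moreover have "eta (1 - lam * r) 0 \<in> reach lam r a"
      unfolding reach_def using e_J kappa_nonneg[OF e_J] by force
    ultimately show "sig k \<in> reach lam r a" unfolding sig_def s_def b_def by auto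
  qed
  have avg: "(\<Sum>k<3. p k *\<^sub>R sig k) = eta s0 0"
  proof -
    have "(\<Sum>k<3. p k *\<^sub>R sig k) = eta (\<Sum>k<3. p k * s k) (\<Sum>k<3. complex_of_real (p k) * b k)"
      unfolding sig_def by (rule avg_eta[OF p3])
    moreover have "(\<Sum>k<3. p k * s k) = s0" using qp(3) unfolding p_def s_def
      by (simp add: numeral_3_eq_3 algebra_simps)
    moreover have "(\<Sum>k<3. complex_of_real (p k) * b k) = 0" unfolding p_def b_def
      by (simp add: numeral_3_eq_3)
    ultimately show ?thesis by simp
  qed
  have "holevo 3 p sig = hbin s0 - Lf s0"
  proof -
    have "vN_entropy (\<Sum>k<3. p k *\<^sub>R sig k) = hbin s0" unfolding avg vN_eta by (simp add: G_hbin)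
    moreover have "(\<Sum>k<3. p k * vN_entropy (sig k)) = q * V + (1 - q) * H"
    proof -
      have "vN_entropy (eta r (-a)) = V" "vN_entropy (eta r a) = V" unfolding V_def vN_eta by simp_all
      moreover have "vN_entropy (eta (1 - lam * r) 0) = H"
      proof -
        have e: "(2 * (1 - lam * r) - 1)^2 + 4 * (cmod (0::complex))^2 = (2 * (1 - lam * r) - 1)^2" by simp
        show ?thesis unfolding H_def vN_eta e G_hbin by (rule refl)
      qed
      ultimately show ?thesis unfolding p_def sig_def s_def b_def by (simp add: numeral_3_eq_3 algebra_simps)
    qed
    moreover have "Lf s0 = q * V + (1 - q) * H" unfolding Lf_def q_def by simp
    ultimately show ?thesis unfolding holevo_def by simp
  qed
  then show ?thesis using pv inr by blast
qed

lemma hbin_cont: "continuous_on {0..1} hbin"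
proof -
  have c: "continuous_on {0..1} (\<lambda>x. - xl x / ln 2 + - xl (1 - x) / ln 2)"
  proof -
    have "continuous_on {0..1} xl" using continuous_on_subset[OF xl_cont] by auto
    moreover have "continuous_on {0..1} (\<lambda>x. xl (1 - x))"
    proof -
      have c1: "continuous_on {0..1} (\<lambda>x::real. 1 - x)" by (intro continuous_intros)
      show ?thesis using continuous_on_compose2[OF xl_cont c1] by auto
    qed
    ultimately show ?thesis by (intro continuous_intros) auto
  qed
  show ?thesis
    by (rule continuous_on_cong[THEN iffD1, OF refl _ c]) (auto simp: hbin_def ent_xl)
qed

lemma Ith:
  "\<exists>s0 \<in> Jint lam r. I_th lam r a = hbin s0 - Lf s0 \<and> (\<forall>sb \<in> Jint lam r. hbin sb - Lf sb \<le> I_th lam r a)"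
proof -
  have "continuous_on (Jint lam r) (\<lambda>s. hbin s - Lf s)"
  proof -
    have "Jint lam r \<subseteq> {0..1}" using J01 by auto
    then have "continuous_on (Jint lam r) hbin" using continuous_on_subset[OF hbin_cont] by blast
    then show ?thesis unfolding Lf_def using D_ne by (intro continuous_intros) auto
  qed
  moreover have "compact (Jint lam r)" "Jint lam r \<noteq> {}" using r_J by (auto simp: Jint_def)
  ultimately obtain s0 where s0: "s0 \<in> Jint lam r" "\<And>y. y \<in> Jint lam r \<Longrightarrow> hbin y - Lf y \<le> hbin s0 - Lf s0"
    using continuous_attains_sup[of "Jint lam r" "\<lambda>s. hbin s - Lf s"] by blast
  have "I_th lam r a = hbin s0 - Lf s0"
    unfolding I_th_def
  proof (rule cSup_eq_maximum)
    obtain n p sig where "prob_vec n p" "\<forall>k<n. sig k \<in> reach lam r a" "holevo n p sig = hbin s0 - Lf s0"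
      using achieve[OF s0(1)] by blast
    then show "hbin s0 - Lf s0 \<in> {holevo n p sig |n p sig. prob_vec n p \<and> (\<forall>k<n. sig k \<in> reach lam r a)}"
      by force
  next
    fix x assume "x \<in> {holevo n p sig |n p sig. prob_vec n p \<and> (\<forall>k<n. sig k \<in> reach lam r a)}"
    then obtain n p sig where "x = holevo n p sig" "prob_vec n p" "\<forall>k<n. sig k \<in> reach lam r a" by blast
    then show "x \<le> hbin s0 - Lf s0" using holevo_bound s0(2) by fastforce
  qed
  then show ?thesis using s0 by auto
qed

end



theorem mainTheorem8:
  fixes E0 E1 kB T lam g r :: real and a :: complex
  assumes "kB > 0" and "T > 0" and "E0 \<le> E1"
    and lam_def: "lam = exp (- (E1 - E0) / (kB * T))"
    and g_def: "g = 1 / (1 + lam)"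
    and "0 \<le> r" and "r \<le> 1" and "(cmod a)\<^sup>2 \<le> r * (1 - r)"
    and "r \<noteq> g"
  shows "(\<forall>sb \<in> Jint lam r.
            (\<exists>n p s. prob_vec n p \<and> (\<forall>j<n. s j \<in> {r, 1 - lam * r})
                \<and> (\<Sum>j<n. p j * s j) = sb
                \<and> (\<Sum>j<n. p j * Sfun lam r a (s j)) = xi lam r a sb)
          \<and> xi lam r a sb =
              ((sb + lam * r - 1) / ((1 + lam) * r - 1)) * vN_entropy (eta r a)
              + (1 - (sb + lam * r - 1) / ((1 + lam) * r - 1)) * hbin (1 - lam * r))
       \<and> (\<exists>s0 \<in> Jint lam r. I_th lam r a = hbin s0 - xi lam r a s0
            \<and> (\<forall>sb \<in> Jint lam r. hbin sb - xi lam r a sb \<le> I_th lam r a))"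
proof -
  have lam0: "0 < lam" using lam_def by simp
  have "- (E1 - E0) / (kB * T) \<le> 0" using assms(1-3) by (intro divide_nonpos_pos) auto
  then have lam1: "lam \<le> 1" using lam_def by simp
  have Dne: "(1 + lam) * r - 1 \<noteq> 0"
  proof
    assume "(1 + lam) * r - 1 = 0"
    then have "r = 1 / (1 + lam)" using lam0 by (simp add: field_simps)
    then show False using assms(9) g_def by simp
  qed
  interpret setting lam r a
    using lam0 lam1 assms(6,7,8) Dne by unfold_locales auto
  have L: "Lf s = ((s + lam * r - 1) / ((1 + lam) * r - 1)) * vN_entropy (eta r a)
              + (1 - (s + lam * r - 1) / ((1 + lam) * r - 1)) * hbin (1 - lam * r)" for s
    unfolding Lf_def D_def V_def H_def ..
  show ?thesis
  proof (intro conjI ballI)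
    fix sb assume sb: "sb \<in> Jint lam r"
    show "\<exists>n p s. prob_vec n p \<and> (\<forall>j<n. s j \<in> {r, 1 - lam * r})
                \<and> (\<Sum>j<n. p j * s j) = sb
                \<and> (\<Sum>j<n. p j * Sfun lam r a (s j)) = xi lam r a sb"
      using xi_eq[OF sb] by simp
    show "xi lam r a sb =
              ((sb + lam * r - 1) / ((1 + lam) * r - 1)) * vN_entropy (eta r a)
              + (1 - (sb + lam * r - 1) / ((1 + lam) * r - 1)) * hbin (1 - lam * r)"
      using xi_eq(1)[OF sb] L by simp
  next
    obtain s0 where "s0 \<in> Jint lam r" "I_th lam r a = hbin s0 - Lf s0"
      "\<forall>sb \<in> Jint lam r. hbin sb - Lf sb \<le> I_th lam r a" using Ith by blast
    then show "\<exists>s0 \<in> Jint lam r. I_th lam r a = hbin s0 - xi lam r a s0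
            \<and> (\<forall>sb \<in> Jint lam r. hbin sb - xi lam r a sb \<le> I_th lam r a)"
      using xi_eq(1) by auto
  qed
qed

end
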